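(* Let $q\in\mathbb C$ with $|q|\ne1$, $q\neq 0$, and let $x\in\mathbb C^*$ be such that none of $x^{\pm1},x^{\pm2}$ is an integer power of $q$. For $m\in\mathbb Z$ let $$\mathbf J_m(x,q)=\begin{pmatrix}1&C_m(x,q)&C_{m+1}(x,q)\\0&A_m(x,q)&A_{m+1}(x,q)\\0&B_m(x,q)&B_{m+1}(x,q)\end{pmatrix}.$$ Then $\mathbf J_{m+1}(x,q)=\mathbf J_m(x,q)A(x,q^m,q)$ with $$A(x,q^m,q)=\begin{pmatrix}1&0&1\\0&0&-1\\0&1&x^{-1}+x-q^{m+1}\end{pmatrix},$$ $\det\mathbf J_m(x,q)=x^{-1}-x$, and $$\mathbf J_m(x,q^{-1})=P\,\mathbf J_{-m-1}(x,q)\,P,\qquad P=\begin{pmatrix}1&0&0\\0&0&1\\0&1&0\end{pmatrix}.$$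
   Context: Notation: $(a;q)_k=\prod_{j=0}^{k-1}(1-aq^j)$. For $|q|\ne1$ and $m\in\mathbb Z$ (the series converge both for $|q|<1$ and $|q|>1$): $C_m(x,q)=\sum_{k\ge0}(-1)^k\frac{q^{k(k+1)/2+km}}{(x^{-1};q)_{k+1}(x;q)_{k+1}}$, $A_m(x,q)=\sum_{k\ge0}(-1)^k\frac{q^{k(k+1)/2+km}x^{k+m}}{(q;q)_k(x^2q;q)_k}$, $B_m(x,q)=A_m(x^{-1},q)$. *)

theory Defs
  imports "HOL-Analysis.Analysis"
begin

definition qpoch :: "complex \<Rightarrow> complex \<Rightarrow> nat \<Rightarrow> complex" where
  "qpoch a q k = (\<Prod>j<k. 1 - a * q ^ j)"

definition Cser :: "int \<Rightarrow> complex \<Rightarrow> complex \<Rightarrow> complex" where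
  "Cser m x q = (\<Sum>k. (-1) ^ k * q powi (int (k * (k + 1) div 2) + int k * m)
       / (qpoch (inverse x) q (k + 1) * qpoch x q (k + 1)))"

definition Aser :: "int \<Rightarrow> complex \<Rightarrow> complex \<Rightarrow> complex" where
  "Aser m x q = (\<Sum>k. (-1) ^ k * q powi (int (k * (k + 1) div 2) + int k * m) * x powi (int k + m)
       / (qpoch q q k * qpoch (x ^ 2 * q) q k))"

definition Bser :: "int \<Rightarrow> complex \<Rightarrow> complex \<Rightarrow> complex" where
  "Bser m x q = Aser m (inverse x) q"

definition mat3 :: "complex \<Rightarrow> complex \<Rightarrow> complex \<Rightarrow> complex \<Rightarrow> complex \<Rightarrow> complex
    \<Rightarrow> complex \<Rightarrow> complex \<Rightarrow> complex \<Rightarrow> complex^3^3" where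
  "mat3 a11 a12 a13 a21 a22 a23 a31 a32 a33 =
     (\<chi> i j. if i = 1 then (if j = 1 then a11 else if j = 2 then a12 else a13)
             else if i = 2 then (if j = 1 then a21 else if j = 2 then a22 else a23)
             else (if j = 1 then a31 else if j = 2 then a32 else a33))"

definition Jmat :: "int \<Rightarrow> complex \<Rightarrow> complex \<Rightarrow> complex^3^3" where
  "Jmat m x q = mat3 1 (Cser m x q) (Cser (m + 1) x q)
                     0 (Aser m x q) (Aser (m + 1) x q)
                     0 (Bser m x q) (Bser (m + 1) x q)"

definition Amat :: "complex \<Rightarrow> complex \<Rightarrow> complex \<Rightarrow> complex^3^3" where
  "Amat x t q = mat3 1 0 1
                     0 0 (-1)
                     0 1 (inverse x + x - t * q)"

definition Pmat :: "complex^3^3" where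
  "Pmat = mat3 1 0 0  0 0 1  0 1 0"

end

theory Submission
  imports Defs
begin

lemma summable_ratio0:
  fixes f :: "nat \<Rightarrow> complex"
  assumes f: "\<And>k. f (Suc k) = f k * r k" and r: "r \<longlonglongrightarrow> 0"
  shows "summable f"
proof -
  have "eventually (\<lambda>k. dist (r k) 0 < 1/2) sequentially"
    using r[unfolded tendsto_iff, rule_format, of "1/2"] by simp
  then obtain N where N: "\<And>k. k \<ge> N \<Longrightarrow> norm (r k) < 1/2"
    by (auto simp: eventually_sequentially)
  show ?thesis
  proof (rule summable_ratio_test[of "1/2" N])
    fix n assume "n \<ge> N"
    then have "norm (f n) * norm (r n) \<le> norm (f n) * (1/2)"
      using N[of n] by (intro mult_left_mono) auto
    then show "norm (f (Suc n)) \<le> 1/2 * norm (f n)" by (simp add: f norm_mult mult.commute)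
  qed simp
qed

lemma ratio_lim:
  fixes q a b c :: complex
  assumes "norm q \<noteq> 1" "q \<noteq> 0" "b \<noteq> 0" "c \<noteq> 0"
    and nb: "\<And>k. 1 - b * q^Suc k \<noteq> 0" and nc: "\<And>k. 1 - c*q^Suc k \<noteq> 0"
  shows "(\<lambda>k. a * q^Suc k / ((1 - b*q^Suc k) * (1 - c*q^Suc k))) \<longlonglongrightarrow> 0"
proof (cases "norm q < 1")
  case True
  have "(\<lambda>k. q^Suc k) \<longlonglongrightarrow> 0" using LIMSEQ_power_zero[OF True] by (rule LIMSEQ_Suc)
  then have "(\<lambda>k. a * q^Suc k / ((1 - b*q^Suc k) * (1 - c*q^Suc k))) \<longlonglongrightarrow> a*0/((1-b*0)*(1-c*0))"
    by (intro tendsto_intros) auto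
  then show ?thesis by simp
next
  case False
  define p where "p = inverse q"
  have "norm p < 1" using False assms(1,2) unfolding p_def
    by (simp add: norm_inverse inverse_less_1_iff)
  have p0: "(\<lambda>k. p^Suc k) \<longlonglongrightarrow> 0" using LIMSEQ_power_zero[OF \<open>norm p < 1\<close>] by (rule LIMSEQ_Suc)
  have eq: "a * q^Suc k / ((1 - b*q^Suc k) * (1 - c*q^Suc k)) = a * p^Suc k / ((p^Suc k - b) * (p^Suc k - c))" for k
  proof -
    define Q where "Q = q^Suc k"
    have Q: "Q \<noteq> 0" using assms(2) by (simp add: Q_def)
    have P: "p^Suc k = inverse Q" by (simp add: p_def Q_def power_inverse)
    have 1: "inverse Q - b = (1 - b*Q) / Q" "inverse Q - c = (1 - c*Q) / Q" using Q by (simp_all add: field_simps)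
    show ?thesis unfolding P 1 using Q nb[of k] nc[of k] unfolding Q_def[symmetric]
      by (simp add: field_simps power2_eq_square)
  qed
  have "(\<lambda>k. a * p^Suc k / ((p^Suc k - b) * (p^Suc k - c))) \<longlonglongrightarrow> a*0/((0-b)*(0-c))"
    by (intro tendsto_intros p0) (use assms(3,4) in auto)
  then show ?thesis unfolding eq by simp
qed

lemma powser_ratio:
  fixes c r :: "nat \<Rightarrow> complex"
  assumes c: "\<And>k. c (Suc k) = c k * r k" and r: "r \<longlonglongrightarrow> 0"
  shows "summable (\<lambda>k. c k * u^k)"
proof (rule summable_ratio0[where r="\<lambda>k. r k * u"])
  show "c (Suc k) * u ^ Suc k = c k * u ^ k * (r k * u)" for k by (simp add: c mult_ac)
  show "(\<lambda>k. r k * u) \<longlonglongrightarrow> 0" using tendsto_mult[OF r tendsto_const[of u]] by simp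
qed

lemma powser_isCont0:
  fixes c r :: "nat \<Rightarrow> complex"
  assumes c: "\<And>k. c (Suc k) = c k * r k" and r: "r \<longlonglongrightarrow> 0"
  shows "isCont (\<lambda>u. \<Sum>k. c k * u^k) 0"
  by (rule isCont_powser[where K=1]) (use powser_ratio[OF c r, of 1] in auto)

lemma nzq: "norm (q::complex) \<noteq> 1 \<Longrightarrow> 1 - q^Suc k \<noteq> 0"
  using power_eq_1_iff[of q "Suc k"] by auto

lemma nzy: assumes "\<forall>n::int. (y::complex) \<noteq> q powi n" "q \<noteq> 0" shows "1 - y * q^Suc k \<noteq> 0"
proof
  assume "1 - y * q^Suc k = 0"
  then have "y = inverse (q^Suc k)" using assms(2) by (simp add: field_simps)
  also have "\<dots> = q powi (- int (Suc k))" by (simp only: power_int_minus power_int_of_nat)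
  finally show False using assms(1) by blast
qed

lemma tri_Suc: "Suc k * (Suc k + 1) div 2 = k * (k+1) div 2 + Suc k"
proof -
  have "Suc k * (Suc k + 1) = k*(k+1) + 2 * Suc k" by simp
  then show ?thesis by simp
qed

lemma qpoch_Suc: "qpoch a q (Suc k) = qpoch a q k * (1 - a * q^k)"
  by (simp add: qpoch_def)

lemma qpoch_0[simp]: "qpoch a q 0 = 1"
  by (simp add: qpoch_def)

definition aco :: "complex \<Rightarrow> complex \<Rightarrow> nat \<Rightarrow> complex" where
  "aco x q k = (-1)^k * q^(k*(k+1) div 2) * x^k / (qpoch q q k * qpoch (x^2*q) q k)"
definition rA :: "complex \<Rightarrow> complex \<Rightarrow> nat \<Rightarrow> complex" where
  "rA x q k = (-x) * q^Suc k / ((1 - 1 * q^Suc k) * (1 - x^2 * q^Suc k))"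
definition cco :: "complex \<Rightarrow> complex \<Rightarrow> nat \<Rightarrow> complex" where
  "cco x q k = (-1)^k * q^(k*(k+1) div 2) / (qpoch (inverse x) q (k+1) * qpoch x q (k+1))"
definition rC :: "complex \<Rightarrow> complex \<Rightarrow> nat \<Rightarrow> complex" where
  "rC x q k = (-1) * q^Suc k / ((1 - inverse x * q^Suc k) * (1 - x * q^Suc k))"

lemma aco_Suc: "aco x q (Suc k) = aco x q k * rA x q k"
  unfolding aco_def rA_def qpoch_Suc tri_Suc
  by (simp add: divide_inverse inverse_mult_distrib power_add mult_ac)

lemma cco_Suc: "cco x q (Suc k) = cco x q k * rC x q k"
  unfolding cco_def rC_def tri_Suc
  by (simp add: divide_inverse inverse_mult_distrib power_add mult_ac qpoch_Suc)


definition FA :: "complex \<Rightarrow> complex \<Rightarrow> complex \<Rightarrow> complex" where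
  "FA x q u = (\<Sum>k. aco x q k * u^k)"
definition FC :: "complex \<Rightarrow> complex \<Rightarrow> complex \<Rightarrow> complex" where
  "FC x q u = (\<Sum>k. cco x q k * u^k)"

lemma rA_lim:
  assumes "norm q \<noteq> 1" "q \<noteq> 0" "x \<noteq> 0" "\<forall>n::int. x^2 \<noteq> q powi n"
  shows "rA x q \<longlonglongrightarrow> 0"
  unfolding rA_def
  by (rule ratio_lim) (use assms nzq nzy in auto)

lemma rC_lim:
  assumes "norm q \<noteq> 1" "q \<noteq> 0" "x \<noteq> 0" "\<forall>n::int. x \<noteq> q powi n" "\<forall>n::int. inverse x \<noteq> q powi n"
  shows "rC x q \<longlonglongrightarrow> 0"
  unfolding rC_def
  by (rule ratio_lim) (use assms nzy in auto)

lemma Aterm: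
  assumes "q \<noteq> 0" "x \<noteq> 0"
  shows "(-1) ^ k * q powi (int (k * (k + 1) div 2) + int k * m) * x powi (int k + m)
       / (qpoch q q k * qpoch (x ^ 2 * q) q k) = x powi m * (aco x q k * (q powi m)^k)"
proof -
  have 1: "q powi (int (k * (k + 1) div 2) + int k * m) = q^(k * (k + 1) div 2) * (q powi m)^k"
    using assms by (simp add: power_int_add power_int_power' mult.commute)
  have 2: "x powi (int k + m) = x^k * x powi m"
    using assms by (simp add: power_int_add)
  show ?thesis unfolding 1 2 aco_def by (simp add: field_simps)
qed

lemma Cterm:
  assumes "q \<noteq> 0"
  shows "(-1) ^ k * q powi (int (k * (k + 1) div 2) + int k * m)
       / (qpoch (inverse x) q (k + 1) * qpoch x q (k + 1)) = cco x q k * (q powi m)^k"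
proof -
  have 1: "q powi (int (k * (k + 1) div 2) + int k * m) = q^(k * (k + 1) div 2) * (q powi m)^k"
    using assms by (simp add: power_int_add power_int_power' mult.commute)
  show ?thesis unfolding 1 cco_def by (simp add: field_simps)
qed

lemma Aser_FA:
  assumes "norm q \<noteq> 1" "q \<noteq> 0" "x \<noteq> 0" "\<forall>n::int. x^2 \<noteq> q powi n"
  shows "Aser m x q = x powi m * FA x q (q powi m)"
proof -
  have s: "summable (\<lambda>k. aco x q k * (q powi m)^k)"
    by (rule powser_ratio[OF aco_Suc rA_lim[OF assms]])
  show ?thesis unfolding Aser_def FA_def Aterm[OF assms(2,3)]
    by (rule suminf_mult[OF s])
qed

lemma Cser_FC:
  assumes "q \<noteq> 0"
  shows "Cser m x q = FC x q (q powi m)"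
  unfolding Cser_def FC_def Cterm[OF assms] ..


lemma FA_rec:
  assumes H: "norm q \<noteq> 1" "q \<noteq> 0" "x \<noteq> 0" "\<forall>n::int. x^2 \<noteq> q powi n"
  shows "x^2 * FA x q (q^2*u) + FA x q u - (x^2+1) * FA x q (q*u) = -(q*x*u) * FA x q (q*u)"
proof -
  have sm: "\<And>v. (\<lambda>k. aco x q k * v^k) sums FA x q v"
    unfolding FA_def by (rule summable_sums, rule powser_ratio[OF aco_Suc rA_lim[OF H]])
  define g where "g k = aco x q k * u^k * ((1 - q^k) * (1 - x^2 * q^k))" for k
  have "(\<lambda>k. x^2 * (aco x q k * (q^2*u)^k) + aco x q k * u^k - (x^2+1) * (aco x q k * (q*u)^k))
     sums (x^2 * FA x q (q^2*u) + FA x q u - (x^2+1) * FA x q (q*u))"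
    by (intro sums_add sums_diff sums_mult sm)
  moreover have "(\<lambda>k. x^2 * (aco x q k * (q^2*u)^k) + aco x q k * u^k - (x^2+1) * (aco x q k * (q*u)^k)) = g"
    by (rule ext) (simp add: g_def power_mult_distrib power_mult[symmetric] power2_eq_square algebra_simps)
  ultimately have "g sums (x^2 * FA x q (q^2*u) + FA x q u - (x^2+1) * FA x q (q*u))" by simp
  moreover have "g 0 = 0" by (simp add: g_def)
  ultimately have 1: "(\<lambda>k. g (Suc k)) sums (x^2 * FA x q (q^2*u) + FA x q u - (x^2+1) * FA x q (q*u))"
    by (simp add: sums_Suc_iff)
  have "g (Suc k) = -(q*x*u) * (aco x q k * (q*u)^k)" for k
  proof -
    have n1: "1 - q^Suc k \<noteq> 0" using nzq H by auto
    have n2: "1 - x^2 * q^Suc k \<noteq> 0" using nzy H by auto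
    have r: "rA x q k * ((1 - q^Suc k) * (1 - x^2 * q^Suc k)) = -x*q^Suc k"
      using n1 n2 unfolding rA_def by (simp del: power_Suc)
    have "g (Suc k) = aco x q k * u^Suc k * (rA x q k * ((1 - q^Suc k) * (1 - x^2 * q^Suc k)))"
      unfolding g_def aco_Suc by (simp only: mult_ac)
    also have "\<dots> = -(q*x*u) * (aco x q k * (q*u)^k)" unfolding r by (simp add: power_mult_distrib mult_ac)
    finally show ?thesis .
  qed
  then have "(\<lambda>k. g (Suc k)) sums (-(q*x*u) * FA x q (q*u))"
    using sums_mult[OF sm[of "q*u"], of "-(q*x*u)"] by simp
  with 1 show ?thesis using sums_unique2 by blast
qed

lemma FC_rec:
  assumes H: "norm q \<noteq> 1" "q \<noteq> 0" "x \<noteq> 0" "\<forall>n::int. x \<noteq> q powi n" "\<forall>n::int. inverse x \<noteq> q powi n"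
  shows "FC x q (q^2*u) + FC x q u - (inverse x + x) * FC x q (q*u) = 1 - (q*u) * FC x q (q*u)"
proof -
  have sm: "\<And>v. (\<lambda>k. cco x q k * v^k) sums FC x q v"
    unfolding FC_def by (rule summable_sums, rule powser_ratio[OF cco_Suc rC_lim[OF H]])
  define g where "g k = cco x q k * u^k * ((1 - inverse x * q^k) * (1 - x * q^k))" for k
  have "(\<lambda>k. (cco x q k * (q^2*u)^k) + cco x q k * u^k - (inverse x + x) * (cco x q k * (q*u)^k))
     sums (FC x q (q^2*u) + FC x q u - (inverse x + x) * FC x q (q*u))"
    by (intro sums_add sums_diff sums_mult sm)
  moreover have "(\<lambda>k. (cco x q k * (q^2*u)^k) + cco x q k * u^k - (inverse x + x) * (cco x q k * (q*u)^k)) = g"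
    using H(3) by (intro ext) (simp add: g_def power_mult_distrib power_mult[symmetric] power2_eq_square algebra_simps)
  ultimately have "g sums (FC x q (q^2*u) + FC x q u - (inverse x + x) * FC x q (q*u))" by simp
  moreover have "g 0 = 1"
  proof -
    have "x \<noteq> 1" using H(4) by (metis power_int_0_right)
    then have "1 - inverse x \<noteq> 0" "1 - x \<noteq> 0" using H(3) by (auto simp: field_simps)
    then have "(1 - inverse x) * (1 - x) \<noteq> 0" by simp
    then show ?thesis by (simp add: g_def cco_def qpoch_def)
  qed
  ultimately have 1: "(\<lambda>k. g (Suc k)) sums (FC x q (q^2*u) + FC x q u - (inverse x + x) * FC x q (q*u) - 1)"
    by (simp add: sums_Suc_iff)
  have "g (Suc k) = -(q*u) * (cco x q k * (q*u)^k)" for k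
  proof -
    have n1: "1 - inverse x * q^Suc k \<noteq> 0" using nzy H by auto
    have n2: "1 - x * q^Suc k \<noteq> 0" using nzy H by auto
    have r: "rC x q k * ((1 - inverse x * q^Suc k) * (1 - x * q^Suc k)) = - (q^Suc k)"
      using n1 n2 unfolding rC_def by (simp del: power_Suc)
    have "g (Suc k) = cco x q k * u^Suc k * (rC x q k * ((1 - inverse x * q^Suc k) * (1 - x * q^Suc k)))"
      unfolding g_def cco_Suc by (simp only: mult_ac)
    also have "\<dots> = -(q*u) * (cco x q k * (q*u)^k)" unfolding r by (simp add: power_mult_distrib mult_ac)
    finally show ?thesis .
  qed
  then have "(\<lambda>k. g (Suc k)) sums (-(q*u) * FC x q (q*u))"
    using sums_mult[OF sm[of "q*u"], of "-(q*u)"] by simp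
  with 1 have "FC x q (q^2*u) + FC x q u - (inverse x + x) * FC x q (q*u) - 1 = -(q*u) * FC x q (q*u)"
    using sums_unique2 by blast
  then show ?thesis by (simp add: algebra_simps)
qed


lemma powi_2: "(z::complex) \<noteq> 0 \<Longrightarrow> z powi (m+2) = z powi m * z^2"
  by (simp add: power_int_add)
lemma powi_1: "(z::complex) \<noteq> 0 \<Longrightarrow> z powi (m+1) = z powi m * z"
  by (simp add: power_int_add)

lemma recA:
  assumes H: "norm q \<noteq> 1" "q \<noteq> 0" "x \<noteq> 0" "\<forall>n::int. x^2 \<noteq> q powi n"
  shows "Aser (m+2) x q = - Aser m x q + (inverse x + x - q powi m * q) * Aser (m+1) x q"
proof -
  define u where "u = q powi m"
  define F0 where "F0 = FA x q u"
  define F1 where "F1 = FA x q (q*u)"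
  define F2 where "F2 = FA x q (q^2*u)"
  have e: "x^2*F2 = -F0 + (x^2+1)*F1 - q*x*u*F1"
    using FA_rec[OF H, of u] unfolding F0_def F1_def F2_def by (simp add: algebra_simps)
  have A: "Aser m x q = x powi m * F0" "Aser (m+1) x q = x powi m * x * F1"
       "Aser (m+2) x q = x powi m * (x^2 * F2)"
    unfolding Aser_FA[OF H] F0_def F1_def F2_def u_def using H(2,3)
    by (simp_all add: powi_1 powi_2 mult_ac)
  show ?thesis unfolding A e u_def[symmetric] using H(3)
    by (simp add: field_simps power2_eq_square)
qed

lemma recC:
  assumes H: "norm q \<noteq> 1" "q \<noteq> 0" "x \<noteq> 0" "\<forall>n::int. x \<noteq> q powi n" "\<forall>n::int. inverse x \<noteq> q powi n"
  shows "Cser (m+2) x q = 1 - Cser m x q + (inverse x + x - q powi m * q) * Cser (m+1) x q"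
proof -
  define u where "u = q powi m"
  have C: "Cser m x q = FC x q u" "Cser (m+1) x q = FC x q (q*u)" "Cser (m+2) x q = FC x q (q^2*u)"
    unfolding Cser_FC[OF H(2)] u_def using H(2) by (simp_all add: powi_1 powi_2 mult_ac)
  show ?thesis unfolding C u_def[symmetric] using FC_rec[OF H, of u]
    by (simp add: algebra_simps)
qed


lemma qpochL1:
  assumes "a \<noteq> 0" "q \<noteq> 0"
  shows "qpoch (a * inverse q) (inverse q) k = (-a)^k * inverse q ^ (k*(k+1) div 2) * qpoch (inverse a * q) q k"
proof (induction k)
  case 0 then show ?case by simp
next
  case (Suc k)
  have f: "1 - a * inverse q * inverse q ^ k = (-a) * inverse q ^ Suc k * (1 - inverse a * q * q^k)"
    using assms by (simp add: field_simps power_inverse)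
  show ?case unfolding qpoch_Suc Suc tri_Suc f by (simp add: power_add mult_ac)
qed

lemma qpochL2:
  assumes "a \<noteq> 0" "q \<noteq> 0"
  shows "qpoch a (inverse q) (Suc k) = (-a)^Suc k * inverse q ^ (k*(k+1) div 2) * qpoch (inverse a) q (Suc k)"
proof (induction k)
  case 0 then show ?case using assms by (simp add: qpoch_def field_simps)
next
  case (Suc k)
  have f: "1 - a * inverse q ^ Suc k = (-a) * inverse q ^ Suc k * (1 - inverse a * q^Suc k)"
    using assms by (simp add: field_simps power_inverse del: power_Suc)
  show ?case unfolding qpoch_Suc[of _ _ "Suc k"] Suc tri_Suc f power_add power_Suc[of "-a" "Suc k"]
    by (simp only: mult_ac)
qed

lemma sq_pow: "(x^2)^k = x^k * (x::complex)^k"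
  by (simp add: power2_eq_square power_mult_distrib)

lemma aco_inv:
  assumes "x \<noteq> 0" "q \<noteq> 0"
  shows "aco x (inverse q) k = aco (inverse x) q k"
proof -
  have 1: "qpoch (inverse q) (inverse q) k = (-1)^k * inverse q ^ (k*(k+1) div 2) * qpoch q q k"
    using qpochL1[of 1 q k] assms by simp
  have 2: "qpoch (x^2 * inverse q) (inverse q) k = (-1)^k * (x^k * x^k) * inverse q ^ (k*(k+1) div 2) * qpoch (inverse x ^ 2 * q) q k"
    using qpochL1[of "x^2" q k] assms by (simp add: power_inverse sq_pow power_minus')
  show ?thesis unfolding aco_def 1 2 using assms
    by (simp add: field_simps power_inverse power_mult_distrib sq_pow)
qed

lemma cco_inv:
  assumes "x \<noteq> 0" "q \<noteq> 0"
  shows "cco x (inverse q) k = cco x q k"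
proof -
  have h: "(-inverse x)^Suc k * (-x)^Suc k = 1"
    using assms by (simp add: power_mult_distrib[symmetric] del: power_Suc)
  have "qpoch (inverse x) (inverse q) (Suc k) * qpoch x (inverse q) (Suc k)
     = ((-inverse x)^Suc k * (-x)^Suc k) * (inverse q ^ (k*(k+1) div 2))^2 * (qpoch x q (Suc k) * qpoch (inverse x) q (Suc k))"
    using qpochL2[of "inverse x" q k] qpochL2[of x q k] assms by (simp add: power2_eq_square mult_ac del: power_Suc)
  also have "\<dots> = (inverse q ^ (k*(k+1) div 2))^2 * (qpoch (inverse x) q (Suc k) * qpoch x q (Suc k))"
    unfolding h by simp
  finally have e: "qpoch (inverse x) (inverse q) (Suc k) * qpoch x (inverse q) (Suc k) =
     (inverse q ^ (k*(k+1) div 2))^2 * (qpoch (inverse x) q (Suc k) * qpoch x q (Suc k))" .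
  show ?thesis unfolding cco_def Suc_eq_plus1[symmetric] e using assms
    by (simp add: field_simps power_inverse power2_eq_square power_mult_distrib del: power_Suc)
qed

lemma Ainv:
  assumes "x \<noteq> 0" "q \<noteq> 0"
  shows "Aser m x (inverse q) = Bser (-m) x q"
proof -
  have iq: "inverse q \<noteq> 0" "inverse x \<noteq> 0" using assms by auto
  have "Aser m x (inverse q) = (\<Sum>k. x powi m * (aco x (inverse q) k * (inverse q powi m)^k))"
    unfolding Aser_def Aterm[OF iq(1) assms(1)] ..
  also have "\<dots> = (\<Sum>k. inverse x powi (-m) * (aco (inverse x) q k * (q powi (-m))^k))"
    using assms by (simp add: aco_inv power_int_minus power_int_inverse)
  also have "\<dots> = Bser (-m) x q"
    unfolding Bser_def Aser_def Aterm[OF assms(2) iq(2)] ..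
  finally show ?thesis .
qed

lemma Cinv:
  assumes "x \<noteq> 0" "q \<noteq> 0"
  shows "Cser m x (inverse q) = Cser (-m) x q"
proof -
  have iq: "inverse q \<noteq> 0" using assms by auto
  show ?thesis unfolding Cser_FC[OF assms(2)] Cser_FC[OF iq] FC_def using assms
    by (simp add: cco_inv power_int_minus power_int_inverse)
qed


lemma FA0: "FA x q 0 = 1"
  unfolding FA_def using powser_zero[of "aco x q"] by (simp add: aco_def)

lemma detW:
  assumes "norm q \<noteq> 1" and "q \<noteq> 0" and "x \<noteq> 0"
    and hyp: "\<forall>n::int. x \<noteq> q powi n \<and> inverse x \<noteq> q powi n
                 \<and> x ^ 2 \<noteq> q powi n \<and> inverse x ^ 2 \<noteq> q powi n"
  shows "Aser m x q * Bser (m+1) x q - Aser (m+1) x q * Bser m x q = inverse x - x"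
proof -
  have Hx: "norm q \<noteq> 1" "q \<noteq> 0" "x \<noteq> 0" "\<forall>n::int. x^2 \<noteq> q powi n" using assms by auto
  have Hi: "norm q \<noteq> 1" "q \<noteq> 0" "inverse x \<noteq> 0" "\<forall>n::int. inverse x^2 \<noteq> q powi n" using assms by auto
  define W where "W m = Aser m x q * Bser (m+1) x q - Aser (m+1) x q * Bser m x q" for m
  have step: "W (i+1) = W i" for i
  proof -
    have e: "i+1+1 = i+2" by simp
    show ?thesis unfolding W_def e Bser_def recA[OF Hx, of i] recA[OF Hi, of i]
      by (simp add: algebra_simps)
  qed
  have const: "W i = W 0" for i
  proof (induction i rule: int_induct[where k=0])
    case base then show ?case by simp
  next
    case (step1 i) then show ?case using step[of i] by simp
  next
    case (step2 i) then show ?case using step[of "i-1"] by simp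
  qed
  define V where "V = (\<lambda>u. FA x q u * FA (inverse x) q (q*u) / x - x * FA x q (q*u) * FA (inverse x) q u)"
  have WV: "W m = V (q powi m)" for m
  proof -
    have xm: "x powi m \<noteq> 0" using assms(3) by (simp add: power_int_not_zero)
    show ?thesis unfolding W_def V_def Bser_def Aser_FA[OF Hx] Aser_FA[OF Hi]
        powi_1[OF assms(2)] powi_1[OF assms(3)] powi_1[OF Hi(3)] using assms(2,3) xm
      by (simp add: power_int_inverse field_simps)
  qed
  have c1: "isCont (FA x q) 0" unfolding FA_def[abs_def] by (rule powser_isCont0[OF aco_Suc rA_lim[OF Hx]])
  have c2: "isCont (FA (inverse x) q) 0" unfolding FA_def[abs_def] by (rule powser_isCont0[OF aco_Suc rA_lim[OF Hi]])
  have c1': "isCont (\<lambda>u. FA x q (q*u)) 0" using isCont_o2[where f="\<lambda>u. q*u" and a=0 and g="FA x q"] c1 by simp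
  have c2': "isCont (\<lambda>u. FA (inverse x) q (q*u)) 0" using isCont_o2[where f="\<lambda>u. q*u" and a=0 and g="FA (inverse x) q"] c2 by simp
  have cont: "isCont V 0" unfolding V_def
    by (intro isCont_mult isCont_diff isCont_divide c1 c2 c1' c2' continuous_const) (use assms(3) in auto)
  have V0: "V 0 = inverse x - x" unfolding V_def by (simp add: FA0 field_simps)
  obtain s :: "nat \<Rightarrow> int" where s: "(\<lambda>n. q powi s n) \<longlonglongrightarrow> 0"
  proof (cases "norm q < 1")
    case True
    then show ?thesis using that[of int] LIMSEQ_power_zero[OF True] by simp
  next
    case False
    then have "norm (inverse q) < 1" using assms(1,2) by (simp add: norm_inverse inverse_less_1_iff)
    moreover have "q powi (- int n) = inverse q ^ n" for n by (simp add: power_int_minus power_inverse)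
    ultimately show ?thesis using that[of "\<lambda>n. - int n"] LIMSEQ_power_zero by auto
  qed
  have "(\<lambda>n. V (q powi s n)) \<longlonglongrightarrow> V 0" by (rule isCont_tendsto_compose[OF cont s])
  moreover have "V (q powi s n) = W 0" for n using WV[of "s n"] const[of "s n"] by simp
  ultimately have "W 0 = V 0" by (simp add: LIMSEQ_const_iff)
  then show ?thesis using const[of m] V0 unfolding W_def by simp
qed


lemma mat3_nth: "mat3 a11 a12 a13 a21 a22 a23 a31 a32 a33 $ i $ j =
  (if i = 1 then (if j = 1 then a11 else if j = 2 then a12 else a13)
             else if i = 2 then (if j = 1 then a21 else if j = 2 then a22 else a23)
             else (if j = 1 then a31 else if j = 2 then a32 else a33))"
  by (simp add: mat3_def)

lemma mat3_eq_iff: "(M = mat3 a11 a12 a13 a21 a22 a23 a31 a32 a33) \<longleftrightarrow>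
  M$1$1 = a11 \<and> M$1$2 = a12 \<and> M$1$3 = a13 \<and> M$2$1 = a21 \<and> M$2$2 = a22 \<and> M$2$3 = a23 \<and>
  M$3$1 = a31 \<and> M$3$2 = a32 \<and> M$3$3 = a33"
  by (auto simp: vec_eq_iff mat3_nth forall_3)

lemma mult3: "mat3 a11 a12 a13 a21 a22 a23 a31 a32 a33 ** mat3 b11 b12 b13 b21 b22 b23 b31 b32 b33
  = mat3 (a11*b11+a12*b21+a13*b31) (a11*b12+a12*b22+a13*b32) (a11*b13+a12*b23+a13*b33)
         (a21*b11+a22*b21+a23*b31) (a21*b12+a22*b22+a23*b32) (a21*b13+a22*b23+a23*b33)
         (a31*b11+a32*b21+a33*b31) (a31*b12+a32*b22+a33*b32) (a31*b13+a32*b23+a33*b33)"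
  by (simp add: mat3_eq_iff matrix_matrix_mult_def sum_3 mat3_nth)

lemma det3: "det (mat3 a11 a12 a13 a21 a22 a23 a31 a32 a33) =
  a11*a22*a33 + a12*a23*a31 + a13*a21*a32 - a11*a23*a32 - a12*a21*a33 - a13*a22*a31"
  by (simp add: det_3 mat3_nth)

lemma assemble:
  assumes "\<And>m. Cser (m+2) x q = 1 - Cser m x q + (inverse x + x - q powi m * q) * Cser (m+1) x q"
   "\<And>m. Aser (m+2) x q = - Aser m x q + (inverse x + x - q powi m * q) * Aser (m+1) x q"
   "\<And>m. Bser (m+2) x q = - Bser m x q + (inverse x + x - q powi m * q) * Bser (m+1) x q"
  "\<And>m. Cser m x (inverse q) = Cser (-m) x q"
  "\<And>m. Aser m x (inverse q) = Bser (-m) x q"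
  "\<And>m. Bser m x (inverse q) = Aser (-m) x q"
  "Aser m x q * Bser (m+1) x q - Aser (m+1) x q * Bser m x q = inverse x - x"
  shows "Jmat (m + 1) x q = Jmat m x q ** Amat x (q powi m) q
     \<and> det (Jmat m x q) = inverse x - x
     \<and> Jmat m x (inverse q) = Pmat ** Jmat (- m - 1) x q ** Pmat"
  using assms(7)
  apply (simp add: Jmat_def Amat_def Pmat_def mult3 det3 assms(4-6))
  apply (simp add: mat3_def vec_eq_iff assms(1-3)[of m, simplified add.assoc, simplified] algebra_simps)
  done

theorem theorem3p1:
  fixes q x :: complex and m :: int
  assumes "norm q \<noteq> 1" and "q \<noteq> 0" and "x \<noteq> 0"
    and "\<forall>n::int. x \<noteq> q powi n \<and> inverse x \<noteq> q powi n
                 \<and> x ^ 2 \<noteq> q powi n \<and> inverse x ^ 2 \<noteq> q powi n"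
  shows "Jmat (m + 1) x q = Jmat m x q ** Amat x (q powi m) q
     \<and> det (Jmat m x q) = inverse x - x
     \<and> Jmat m x (inverse q) = Pmat ** Jmat (- m - 1) x q ** Pmat"
proof (rule assemble)
  have Hx: "norm q \<noteq> 1" "q \<noteq> 0" "x \<noteq> 0" "\<forall>n::int. x^2 \<noteq> q powi n" using assms by auto
  have Hi: "norm q \<noteq> 1" "q \<noteq> 0" "inverse x \<noteq> 0" "\<forall>n::int. inverse x^2 \<noteq> q powi n" using assms by auto
  have Hc: "norm q \<noteq> 1" "q \<noteq> 0" "x \<noteq> 0" "\<forall>n::int. x \<noteq> q powi n" "\<forall>n::int. inverse x \<noteq> q powi n"
    using assms by auto
  show "Cser (k+2) x q = 1 - Cser k x q + (inverse x + x - q powi k * q) * Cser (k+1) x q" for k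
    by (rule recC[OF Hc])
  show "Aser (k+2) x q = - Aser k x q + (inverse x + x - q powi k * q) * Aser (k+1) x q" for k
    by (rule recA[OF Hx])
  show "Bser (k+2) x q = - Bser k x q + (inverse x + x - q powi k * q) * Bser (k+1) x q" for k
    unfolding Bser_def using recA[OF Hi, of k] by (simp add: add.commute)
  show "Cser k x (inverse q) = Cser (-k) x q" for k using Cinv assms(2,3) by blast
  show "Aser k x (inverse q) = Bser (-k) x q" for k using Ainv assms(2,3) by blast
  show "Bser k x (inverse q) = Aser (-k) x q" for k
    unfolding Bser_def using Ainv[of "inverse x" q k] assms(2,3) by (simp add: Bser_def)
  show "Aser m x q * Bser (m+1) x q - Aser (m+1) x q * Bser m x q = inverse x - x"
    by (rule detW[OF assms])
qed

end
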